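(* For every integer $n\geq 0$, \[ \overline{p}(n)\equiv (-1)^{n}\,\overline{p}(4n)\pmod{8}. \]
   Context: An overpartition of a nonnegative integer $n$ is a partition of $n$ in which the first occurrence of each distinct part may be overlined. $\overline{p}(n)$ denotes the number of overpartitions of $n$, with $\overline{p}(0)=1$; equivalently $\sum_{n\ge0}\overline{p}(n)q^n=\prod_{k\ge1}\frac{1+q^k}{1-q^k}$. *)

theory Defs
  imports Main "HOL-Library.Multiset" "HOL-Number_Theory.Cong"
begin

text \<open>An overpartition of n is a partition of n (a multiset of positive parts
summing to n) together with a choice of a set of distinct parts whose first
occurrence is overlined.\<close>

definition overpartitions :: "nat \<Rightarrow> (nat multiset \<times> nat set) set" where
  "overpartitions n = {(M, S). (\<forall>x \<in># M. x > 0) \<and> sum_mset M = n \<and> S \<subseteq> set_mset M}"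

definition overpartition_count :: "nat \<Rightarrow> nat" where
  "overpartition_count n = card (overpartitions n)"

end

theory Submission
  imports Defs
begin

lemma invol_even:
  assumes "finite S" "\<forall>x\<in>S. f x \<in> S \<and> f (f x) = x \<and> f x \<noteq> x"
  shows "even (card S)"
  using assms
proof (induction "card S" arbitrary: S rule: less_induct)
  case less
  show ?case
  proof (cases "S = {}")
    case True then show ?thesis by simp
  next
    case False
    then obtain x where x: "x \<in> S" by blast
    let ?S' = "S - {x, f x}"
    have fx: "f x \<in> S" "f x \<noteq> x" "f (f x) = x" using less.prems x by auto
    have c: "card ?S' = card S - 2" using fx x less.prems(1)
      by (simp add: card_Diff_subset)
    have c2: "card S \<ge> 2"
    proof -
      have "{x, f x} \<subseteq> S" using x fx by auto
      then have "card {x, f x} \<le> card S" using less.prems(1) card_mono by blast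
      then show ?thesis using fx by simp
    qed
    have "even (card ?S')"
    proof (rule less.hyps)
      show "card ?S' < card S" using c c2 by simp
      show "finite ?S'" using less.prems(1) by simp
      show "\<forall>y\<in>?S'. f y \<in> ?S' \<and> f (f y) = y \<and> f y \<noteq> y"
      proof
        fix y assume y: "y \<in> ?S'"
        have "f y \<in> S" "f (f y) = y" "f y \<noteq> y" using y less.prems(2) by auto
        moreover have "f y \<noteq> x" using y fx by (metis DiffE insertCI calculation(2))
        moreover have "f y \<noteq> f x" using y fx calculation(2)
          by (metis DiffD2 insertCI)
        ultimately show "f y \<in> ?S' \<and> f (f y) = y \<and> f y \<noteq> y" by auto
      qed
    qed
    then show ?thesis using c c2 by (simp add: even_diff_nat)
  qed
qed

lemma invol_parity:
  assumes "finite S" "\<forall>x\<in>S. f x \<in> S \<and> f (f x) = x"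
  shows "\<exists>j. card S = card {x\<in>S. f x = x} + 2 * j"
proof -
  let ?F = "{x\<in>S. f x = x}"
  have "even (card (S - ?F))"
    apply (rule invol_even[where f = f])
    using assms by auto
  moreover have "card S = card ?F + card (S - ?F)"
    using assms(1) by (metis (no_types, lifting) card_Diff_subset card_mono
       le_add_diff_inverse mem_Collect_eq subsetI finite_subset)
  ultimately show ?thesis by (metis evenE)
qed


definition Rs :: "nat \<Rightarrow> (nat \<times> nat) set" where
  "Rs n = {(a,b). a*b = n}"
definition S2 :: "nat \<Rightarrow> (nat \<times> nat \<times> nat \<times> nat) set" where
  "S2 n = {(Y,A,X,B). A*Y + B*X = n \<and> 0 < X \<and> X < Y \<and> 0 < A \<and> 0 < B}"
definition conj2 :: "nat \<times> nat \<times> nat \<times> nat \<Rightarrow> nat \<times> nat \<times> nat \<times> nat" where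
  "conj2 t = (case t of (Y,A,X,B) \<Rightarrow> (A+B, X, A, Y-X))"

lemma finite_Rs: "n > 0 \<Longrightarrow> finite (Rs n)"
proof -
  assume n: "n > 0"
  have "Rs n \<subseteq> {..n} \<times> {..n}"
    using n by (auto simp: Rs_def)
  then show ?thesis by (rule finite_subset) simp
qed

lemma finite_sub_Rs: "(n::nat) > 0 \<Longrightarrow> finite {(a,b). a*b = n \<and> P a b}"
proof -
  assume n: "n > 0"
  show ?thesis by (rule finite_subset[OF _ finite_Rs[OF n]]) (auto simp: Rs_def)
qed

lemma finite_S2: "finite (S2 n)"
proof -
  have "S2 n \<subseteq> {..n} \<times> {..n} \<times> {..n} \<times> {..n}"
  proof
    fix t assume "t \<in> S2 n"
    then obtain Y A X B where t: "t = (Y,A,X,B)" "A*Y + B*X = n" "0 < X" "X < Y" "0 < A" "0 < B"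
      by (auto simp: S2_def)
    have 1: "A*Y \<le> n" "B*X \<le> n" using t(2) by auto
    have 2: "Y \<le> A*Y" "A \<le> A*Y" "X \<le> B*X" "B \<le> B*X" using t(3-6) by auto
    have "Y \<le> n" "A \<le> n" "X \<le> n" "B \<le> n" using 1 2 by linarith+
    then show "t \<in> {..n} \<times> {..n} \<times> {..n} \<times> {..n}" using t by auto
  qed
  then show ?thesis by (rule finite_subset) simp
qed

lemma swap_card:
  fixes n :: nat
  assumes "n > 0"
  shows "card {(a,b). a*b = n \<and> P a b} = card {(a,b). a*b = n \<and> P b a}"
proof -
  have "{(a,b). a*b = n \<and> P b a} = (\<lambda>(a,b). (b,a)) ` {(a,b). a*b = n \<and> P a b}"
    by (auto simp: image_def mult.commute)
  moreover have "inj_on (\<lambda>(a,b). (b,a)) {(a,b). a*b = n \<and> P a b}"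
    by (auto simp: inj_on_def)
  ultimately show ?thesis by (simp add: card_image)
qed

lemma card_split:
  fixes n :: nat
  assumes "n > 0"
  shows "card {(a,b). a*b = n \<and> P a b} =
         card {(a,b). a*b = n \<and> P a b \<and> Q a b} + card {(a,b). a*b = n \<and> P a b \<and> \<not> Q a b}"
proof -
  have "{(a,b). a*b = n \<and> P a b} =
         {(a,b). a*b = n \<and> P a b \<and> Q a b} \<union> {(a,b). a*b = n \<and> P a b \<and> \<not> Q a b}" by auto
  moreover have "{(a,b). a*b = n \<and> P a b \<and> Q a b} \<inter> {(a,b). a*b = n \<and> P a b \<and> \<not> Q a b} = {}"
    by auto
  ultimately show ?thesis
    using finite_sub_Rs[OF assms] by (simp add: card_Un_disjoint)
qed

lemma Lopp_O1:
  fixes n :: nat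
  assumes "n > 0"
  shows "card {(a,b). a*b = n \<and> a < b \<and> odd (a+b)} = card {(a,b). a*b = n \<and> odd a \<and> even b}"
proof -
  let ?Opp = "{(a,b). a*b = n \<and> odd (a+b)}"
  have 1: "card ?Opp = card {(a,b). a*b = n \<and> odd (a+b) \<and> a < b} + card {(a,b). a*b = n \<and> odd (a+b) \<and> \<not> a < b}"
    by (rule card_split[OF assms])
  have e1: "{(a,b). a*b = n \<and> odd (a+b) \<and> \<not> a < b} = {(a,b). a*b = n \<and> b < a \<and> odd (b+a)}"
    by (auto simp: not_less_iff_gr_or_eq add.commute)
  have 2: "card ?Opp = card {(a,b). a*b = n \<and> odd (a+b) \<and> odd a} + card {(a,b). a*b = n \<and> odd (a+b) \<and> \<not> odd a}"
    by (rule card_split[OF assms])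
  have e2: "{(a,b). a*b = n \<and> odd (a+b) \<and> \<not> odd a} = {(a,b). a*b = n \<and> odd b \<and> even a}"
    by auto
  have e3: "{(a,b). a*b = n \<and> odd (a+b) \<and> odd a} = {(a,b). a*b = n \<and> odd a \<and> even b}"
    by auto
  have e4: "{(a,b). a*b = n \<and> odd (a+b) \<and> a < b} = {(a,b). a*b = n \<and> a < b \<and> odd (a+b)}"
    by auto
  have s1: "card {(a,b). a*b = n \<and> b < a \<and> odd (b+a)} = card {(a,b). a*b = n \<and> a < b \<and> odd (a+b)}"
    by (rule swap_card[OF assms])
  have s2: "card {(a,b). a*b = n \<and> odd b \<and> even a} = card {(a,b). a*b = n \<and> odd a \<and> even b}"
    by (rule swap_card[OF assms])
  show ?thesis using 1 2 e1 e2 e3 e4 s1 s2 by simp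
qed

lemma Fix2_Lsame:
  assumes "n > 0"
  shows "card {t \<in> S2 n. conj2 t = t} = card {(a,b). a*b = n \<and> a < b \<and> even (a+b)}"
proof -
  let ?F = "{t \<in> S2 n. conj2 t = t}"
  let ?h = "\<lambda>(Y::nat,A::nat,X::nat,B::nat). (A, A + 2*B)"
  have F: "?F = {(A+B, A, A, B) | A B. A*(A+2*B) = n \<and> 0 < A \<and> 0 < B}"
  proof (rule set_eqI, rule iffI)
    fix t assume "t \<in> ?F"
    then obtain Y A X B where t: "t = (Y,A,X,B)" "A*Y + B*X = n" "0 < X" "X < Y" "0 < A" "0 < B"
      "A + B = Y" "X = A" "Y - X = B"
      by (auto simp: S2_def conj2_def)
    then show "t \<in> {(A+B, A, A, B) | A B. A*(A+2*B) = n \<and> 0 < A \<and> 0 < B}"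
      by (auto simp: algebra_simps)
  next
    fix t assume "t \<in> {(A+B, A, A, B) | A B. A*(A+2*B) = n \<and> 0 < A \<and> 0 < B}"
    then show "t \<in> ?F" by (auto simp: S2_def conj2_def algebra_simps)
  qed
  have img: "?h ` ?F = {(a,b). a*b = n \<and> a < b \<and> even (a+b)}"
  proof (rule set_eqI, rule iffI)
    fix p assume "p \<in> ?h ` ?F"
    then show "p \<in> {(a,b). a*b = n \<and> a < b \<and> even (a+b)}" unfolding F by auto
  next
    fix p assume p: "p \<in> {(a,b). a*b = n \<and> a < b \<and> even (a+b)}"
    then obtain a b where ab: "p = (a,b)" "a*b = n" "a < b" "even (a+b)" by auto
    have "even (b - a)" using ab(4) by (simp add: even_diff_nat add.commute)
    then obtain c where c: "b - a = 2*c" by (rule evenE)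
    have b: "b = a + 2*c" using c ab by simp
    have "a > 0" using ab assms by (metis gr0I mult_0)
    moreover have "c > 0" using ab b by simp
    ultimately have "(a+c, a, a, c) \<in> ?F" unfolding F using ab b by auto
    moreover have "?h (a+c, a, a, c) = p" using ab b by simp
    ultimately show "p \<in> ?h ` ?F" by force
  qed
  have "inj_on ?h ?F" unfolding F by (auto simp: inj_on_def)
  then show ?thesis using img card_image by fastforce
qed

lemma conj2_invol: "\<forall>t\<in>S2 n. conj2 t \<in> S2 n \<and> conj2 (conj2 t) = t"
proof
  fix t assume "t \<in> S2 n"
  then obtain Y A X B where t: "t = (Y,A,X,B)" "A*Y + B*X = n" "0 < X" "X < Y" "0 < A" "0 < B"
    by (auto simp: S2_def)
  have 1: "A*X \<le> A*Y" using t by simp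
  have 2: "A*(Y-X) = A*Y - A*X" by (simp add: diff_mult_distrib2)
  have 3: "(A+B)*X = A*X + B*X" by (simp add: distrib_right)
  have "(A+B)*X + A*(Y-X) = A*Y + B*X"
    using 1 2 3 by linarith
  then show "conj2 t \<in> S2 n \<and> conj2 (conj2 t) = t" using t
    by (auto simp: S2_def conj2_def algebra_simps)
qed

lemma mod4_main:
  assumes "n > 0"
  shows "\<exists>j. card (Rs n) + 2 * card (S2 n) =
             card {(a,b). a*b = n \<and> a = b} + 2 * card {(a,b). a*b = n \<and> odd a \<and> even b} + 4 * j"
proof -
  obtain j where j: "card (S2 n) = card {t \<in> S2 n. conj2 t = t} + 2*j"
    using invol_parity[OF finite_S2 conj2_invol] by blast
  have R0: "Rs n = {(a,b). a*b = n \<and> True}" by (simp add: Rs_def)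
  have c1: "card {(a,b). a*b = n \<and> True} = card {(a,b). a*b = n \<and> True \<and> a = b} + card {(a,b). a*b = n \<and> True \<and> a \<noteq> b}"
    by (rule card_split[OF assms])
  have c2: "card {(a,b). a*b = n \<and> a \<noteq> b} = card {(a,b). a*b = n \<and> a \<noteq> b \<and> a < b} + card {(a,b). a*b = n \<and> a \<noteq> b \<and> \<not> a < b}"
    by (rule card_split[OF assms])
  have e1: "{(a,b). a*b = n \<and> a \<noteq> b \<and> \<not> a < b} = {(a,b). a*b = n \<and> b < a}" by auto
  have e2: "{(a,b). a*b = n \<and> a \<noteq> b \<and> a < b} = {(a,b). a*b = n \<and> a < b}" by auto
  have s: "card {(a,b). a*b = n \<and> b < a} = card {(a::nat,b). a*b = n \<and> a < b}"
    by (rule swap_card[OF assms])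
  have c3: "card {(a,b). a*b = n \<and> a < b} = card {(a,b). a*b = n \<and> a < b \<and> even (a+b)} + card {(a,b). a*b = n \<and> a < b \<and> \<not> even (a+b)}"
    by (rule card_split[OF assms])
  have L: "card {(a,b). a*b = n \<and> a < b \<and> odd (a+b)} = card {(a,b). a*b = n \<and> odd a \<and> even b}"
    by (rule Lopp_O1[OF assms])
  have F: "card {t \<in> S2 n. conj2 t = t} = card {(a,b). a*b = n \<and> a < b \<and> even (a+b)}"
    by (rule Fix2_Lsame[OF assms])
  show ?thesis
    apply (rule exI[of _ "card {(a,b). a*b = n \<and> a < b \<and> even (a+b)} + j"])
    using j R0 c1 c2 e1 e2 s c3 L F by simp
qed

definition Pt :: "nat \<Rightarrow> nat multiset set" where
  "Pt n = {M. (\<forall>x\<in>#M. x > 0) \<and> sum_mset M = n}"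

lemma size_le_sum_pos: "(\<forall>x\<in>#M. x > 0) \<Longrightarrow> size M \<le> sum_mset (M :: nat multiset)"
  by (induction M) auto

lemma mem_le_sum: "x \<in># M \<Longrightarrow> x \<le> sum_mset (M :: nat multiset)"
proof -
  assume "x \<in># M"
  then obtain N where "M = add_mset x N" by (blast dest: multi_member_split)
  then show ?thesis by simp
qed

lemma finite_Pt: "finite (Pt n)"
proof -
  have "Pt n \<subseteq> mset ` {xs. set xs \<subseteq> {1..n} \<and> length xs \<le> n}"
  proof
    fix M assume M: "M \<in> Pt n"
    obtain xs where xs: "mset xs = M" using ex_mset by blast
    have "set xs \<subseteq> {1..n}"
    proof
      fix x assume "x \<in> set xs"
      then have "x \<in># M" using xs by auto
      then show "x \<in> {1..n}" using M mem_le_sum[of x M] by (auto simp: Pt_def Suc_le_eq)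
    qed
    moreover have "length xs \<le> n" using M xs size_le_sum_pos[of M] by (auto simp: Pt_def)
    ultimately show "M \<in> mset ` {xs. set xs \<subseteq> {1..n} \<and> length xs \<le> n}" using xs by blast
  qed
  then show ?thesis by (rule finite_subset) (simp add: finite_lists_length_le)
qed

lemma card_over: "overpartition_count n = (\<Sum>M\<in>Pt n. 2 ^ card (set_mset M))"
proof -
  have "overpartitions n = Sigma (Pt n) (\<lambda>M. Pow (set_mset M))"
    by (auto simp: overpartitions_def Pt_def)
  then have "overpartition_count n = (\<Sum>M\<in>Pt n. card (Pow (set_mset M)))"
    unfolding overpartition_count_def using finite_Pt by (simp add: card_SigmaI)
  then show ?thesis by (simp add: card_Pow)
qed

definition gw :: "nat \<Rightarrow> int" where
  "gw k = of_bool (k = 0) + 2 * of_bool (k = 1) + 4 * of_bool (k = 2)"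

lemma pow_gw: "[(2::int) ^ k = gw k] (mod 8)"
proof (cases "k \<ge> 3")
  case True
  then obtain j where "k = j + 3" by (metis add.commute le_Suc_ex)
  then have "(2::int)^k = 8 * 2^j" by (simp add: power_add)
  then show ?thesis using True by (simp add: gw_def cong_def)
next
  case False
  then have "k = 0 \<or> k = 1 \<or> k = 2" by auto
  then show ?thesis by (auto simp: gw_def cong_def)
qed

lemma over_mod8:
  "[int (overpartition_count n) =
     int (card (Pt n \<inter> {M. card (set_mset M) = 0})) + 2 * int (card (Pt n \<inter> {M. card (set_mset M) = 1}))
     + 4 * int (card (Pt n \<inter> {M. card (set_mset M) = 2}))] (mod 8)"
proof -
  have "int (overpartition_count n) = (\<Sum>M\<in>Pt n. (2::int) ^ card (set_mset M))"
    by (simp add: card_over)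
  also have "[\<dots> = (\<Sum>M\<in>Pt n. gw (card (set_mset M)))] (mod 8)"
    by (rule cong_sum) (rule pow_gw)
  also have "(\<Sum>M\<in>Pt n. gw (card (set_mset M))) =
     (\<Sum>M\<in>Pt n. of_bool (card (set_mset M) = 0)) + 2 * (\<Sum>M\<in>Pt n. of_bool (card (set_mset M) = 1))
     + 4 * (\<Sum>M\<in>Pt n. of_bool (card (set_mset M) = 2))"
    by (simp add: gw_def sum.distrib sum_distrib_left)
  also have "\<dots> = int (card (Pt n \<inter> {M. card (set_mset M) = 0})) + 2 * int (card (Pt n \<inter> {M. card (set_mset M) = 1}))
     + 4 * int (card (Pt n \<inter> {M. card (set_mset M) = 2}))"
    using finite_Pt by (simp add: sum_of_bool_eq)
  finally show ?thesis .
qed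

lemma P0: "n > 0 \<Longrightarrow> Pt n \<inter> {M. card (set_mset M) = 0} = {}"
  by (auto simp: Pt_def)

lemma P1: "n > 0 \<Longrightarrow> card (Pt n \<inter> {M. card (set_mset M) = 1}) = card (Rs n)"
proof -
  assume n: "n > 0"
  let ?g = "\<lambda>(a, x). replicate_mset a (x::nat)"
  have "bij_betw ?g (Rs n) (Pt n \<inter> {M. card (set_mset M) = 1})"
    unfolding bij_betw_def
  proof
    show "inj_on ?g (Rs n)"
    proof (rule inj_onI)
      fix p q assume p: "p \<in> Rs n" and q: "q \<in> Rs n" and e: "?g p = ?g q"
      obtain a x where px: "p = (a,x)" "a*x = n" using p by (auto simp: Rs_def)
      obtain b y where qy: "q = (b,y)" "b*y = n" using q by (auto simp: Rs_def)
      have "a > 0" "b > 0" using px qy n by (auto intro: gr0I)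
      have e': "replicate_mset a x = replicate_mset b y" using e px qy by simp
      then have "count (replicate_mset a x) x = count (replicate_mset b y) x" by simp
      then have "x = y \<and> a = b" using \<open>a > 0\<close> \<open>b > 0\<close> by (auto split: if_splits)
      then show "p = q" using px qy by simp
    qed
    show "?g ` Rs n = Pt n \<inter> {M. card (set_mset M) = 1}"
    proof (rule set_eqI, rule iffI)
      fix M assume "M \<in> ?g ` Rs n"
      then obtain a x where ax: "M = replicate_mset a x" "a*x = n" by (auto simp: Rs_def)
      have "a > 0" "x > 0" using ax n by (auto intro: gr0I)
      then show "M \<in> Pt n \<inter> {M. card (set_mset M) = 1}" using ax by (auto simp: Pt_def)
    next
      fix M assume M: "M \<in> Pt n \<inter> {M. card (set_mset M) = 1}"
      then obtain x where x: "set_mset M = {x}" by (auto simp: card_1_singleton_iff)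
      have eq: "M = replicate_mset (count M x) x"
        by (rule multiset_eqI) (metis count_replicate_mset count_eq_zero_iff singletonD x)
      have "sum_mset M = count M x * x" by (subst eq) simp
      then have "(count M x, x) \<in> Rs n" using M by (auto simp: Rs_def Pt_def)
      moreover have ge: "?g (count M x, x) = M" by (simp only: prod.case eq[symmetric])
      ultimately show "M \<in> ?g ` Rs n" using image_eqI[where f = ?g] by metis
    qed
  qed
  then show ?thesis by (simp add: bij_betw_same_card)
qed

lemma P2: "card (Pt n \<inter> {M. card (set_mset M) = 2}) = card (S2 n)"
proof -
  let ?g = "\<lambda>(Y, A, X, B). replicate_mset A Y + replicate_mset B (X::nat)"
  have "bij_betw ?g (S2 n) (Pt n \<inter> {M. card (set_mset M) = 2})"
    unfolding bij_betw_def
  proof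
    show "inj_on ?g (S2 n)"
    proof (rule inj_onI)
      fix p q assume p: "p \<in> S2 n" and q: "q \<in> S2 n" and e: "?g p = ?g q"
      obtain Y A X B where t: "p = (Y,A,X,B)" "0 < X" "X < Y" "0 < A" "0 < B"
        using p by (auto simp: S2_def)
      obtain Y' A' X' B' where t': "q = (Y',A',X',B')" "0 < X'" "X' < Y'" "0 < A'" "0 < B'"
        using q by (auto simp: S2_def)
      let ?M = "replicate_mset A Y + replicate_mset B X"
      have e': "?M = replicate_mset A' Y' + replicate_mset B' X'" using e t t' by simp
      have s1: "set_mset ?M = {X, Y}" using t by auto
      have s2: "set_mset ?M = {X', Y'}" using t' e' by auto
      have "X = X' \<and> Y = Y'" using s1 s2 t t'
        by (auto simp: doubleton_eq_iff)
      moreover have "count ?M Y = count (replicate_mset A' Y' + replicate_mset B' X') Y"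
        "count ?M X = count (replicate_mset A' Y' + replicate_mset B' X') X" using e' by simp_all
      ultimately have "A = A'" "B = B'" using t t' by auto
      then show "p = q" using t t' \<open>X = X' \<and> Y = Y'\<close> by simp
    qed
    show "?g ` S2 n = Pt n \<inter> {M. card (set_mset M) = 2}"
    proof (rule set_eqI, rule iffI)
      fix M assume "M \<in> ?g ` S2 n"
      then obtain Y A X B where t: "M = replicate_mset A Y + replicate_mset B X"
          "A*Y + B*X = n" "0 < X" "X < Y" "0 < A" "0 < B"
        by (auto simp: S2_def)
      have "set_mset M = {X, Y}" using t by auto
      then show "M \<in> Pt n \<inter> {M. card (set_mset M) = 2}" using t by (auto simp: Pt_def)
    next
      fix M assume M: "M \<in> Pt n \<inter> {M. card (set_mset M) = 2}"
      then obtain u v where uv: "set_mset M = {u, v}" "u \<noteq> v" by (auto simp: card_2_iff)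
      define X where "X = min u v"
      define Y where "Y = max u v"
      have XY: "set_mset M = {X, Y}" "X < Y" using uv by (auto simp: X_def Y_def min_def max_def)
      have eq: "M = replicate_mset (count M Y) Y + replicate_mset (count M X) X"
      proof (rule multiset_eqI)
        fix z
        show "count M z = count (replicate_mset (count M Y) Y + replicate_mset (count M X) X) z"
        proof (cases "z = Y \<or> z = X")
          case True then show ?thesis using XY(2) by auto
        next
          case False
          then have "z \<notin># M" using XY(1) by auto
          then have "count M z = 0" by (simp add: count_eq_zero_iff)
          then show ?thesis using False by simp
        qed
      qed
      have sm: "sum_mset M = count M Y * Y + count M X * X" by (subst eq) simp
      have inM: "Y \<in># M" "X \<in># M" using XY(1) by simp_all
      have cp: "count M Y > 0" "count M X > 0" using inM by simp_all
      have X0: "X > 0" using M inM(2) by (simp add: Pt_def)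
      have sn: "sum_mset M = n" using M by (simp add: Pt_def)
      have mem: "(Y, count M Y, X, count M X) \<in> S2 n"
        unfolding S2_def using sm sn cp X0 XY(2) by (simp add: mult.commute)
      have ge: "?g (Y, count M Y, X, count M X) = M" by (simp only: prod.case eq[symmetric])
      show "M \<in> ?g ` S2 n" using image_eqI[where f = ?g, OF ge[symmetric] mem] .
    qed
  qed
  then show ?thesis by (simp add: bij_betw_same_card)
qed


lemma D4:
  fixes n :: nat
  shows "card {(a,b). a*b = 4*n \<and> a = b} = card {(a,b). a*b = n \<and> a = b}"
proof -
  let ?h = "\<lambda>(a::nat,b::nat). (2*a, 2*b)"
  have img: "?h ` {(a,b). a*b = n \<and> a = b} = {(a,b). a*b = 4*n \<and> a = b}"
  proof (rule set_eqI, rule iffI)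
    fix p assume "p \<in> ?h ` {(a,b). a*b = n \<and> a = b}"
    then show "p \<in> {(a,b). a*b = 4*n \<and> a = b}" by auto
  next
    fix p assume "p \<in> {(a,b). a*b = 4*n \<and> a = b}"
    then obtain a where a: "p = (a,a)" "a*a = 4*n" by auto
    then have "even (a*a)" by simp
    then have "even a" by simp
    then obtain c where c: "a = 2*c" by (rule evenE)
    then have "c*c = n" using a by simp
    then have "(c,c) \<in> {(a,b). a*b = n \<and> a = b}" by simp
    moreover have "p = ?h (c,c)" using a c by simp
    ultimately show "p \<in> ?h ` {(a,b). a*b = n \<and> a = b}" by (rule rev_image_eqI)
  qed
  have inj: "inj_on ?h {(a,b). a*b = n \<and> a = b}" by (auto simp: inj_on_def)
  show ?thesis using card_image[OF inj] img by simp
qed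

lemma four_dvd_odd: "odd (a::nat) \<Longrightarrow> a*b = 4*m \<Longrightarrow> \<exists>c. b = 4*c \<and> a*c = m"
proof -
  assume a: "odd a" and ab: "a*b = 4*m"
  have "even (a*b)" using ab by simp
  then have "even b" using a by simp
  then obtain c where c: "b = 2*c" by (rule evenE)
  then have "a*c = 2*m" using ab by simp
  then have "even (a*c)" by simp
  then have "even c" using a by simp
  then obtain d where d: "c = 2*d" by (rule evenE)
  then have "a*d = m" using c ab by simp
  then show ?thesis using c d by auto
qed

lemma O4:
  fixes n :: nat
  shows "card {(a,b). a*b = 4*n \<and> odd a \<and> even b} = card {(a,b). a*b = n \<and> odd a}"
proof -
  let ?h = "\<lambda>(a::nat,b::nat). (a, 4*b)"
  have img: "?h ` {(a,b). a*b = n \<and> odd a} = {(a,b). a*b = 4*n \<and> odd a \<and> even b}"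
  proof (rule set_eqI, rule iffI)
    fix p assume "p \<in> ?h ` {(a,b). a*b = n \<and> odd a}"
    then show "p \<in> {(a,b). a*b = 4*n \<and> odd a \<and> even b}" by auto
  next
    fix p assume "p \<in> {(a,b). a*b = 4*n \<and> odd a \<and> even b}"
    then obtain a b where ab: "p = (a,b)" "a*b = 4*n" "odd a" by auto
    then obtain c where "b = 4*c" "a*c = n" using four_dvd_odd by blast
    then have "(a,c) \<in> {(a,b). a*b = n \<and> odd a}" "p = ?h (a,c)" using ab by simp_all
    then show "p \<in> ?h ` {(a,b). a*b = n \<and> odd a}" by (rule rev_image_eqI)
  qed
  have inj: "inj_on ?h {(a,b). a*b = n \<and> odd a}" by (auto simp: inj_on_def)
  show ?thesis using card_image[OF inj] img by simp
qed

lemma Rs_par: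
  fixes n :: nat
  assumes "n > 0"
  shows "\<exists>l. card (Rs n) = card {(a,b). a*b = n \<and> a = b} + 2*l"
proof -
  have inv: "\<forall>x\<in>Rs n. (\<lambda>(a,b). (b,a)) x \<in> Rs n \<and> (\<lambda>(a,b). (b,a)) ((\<lambda>(a,b). (b,a)) x) = x"
    by (auto simp: Rs_def mult.commute)
  have "{x\<in>Rs n. (\<lambda>(a,b). (b,a)) x = x} = {(a,b). a*b = n \<and> a = b}"
    by (auto simp: Rs_def)
  then show ?thesis using invol_parity[OF finite_Rs[OF assms] inv] by simp
qed

lemma pmod:
  assumes n: "n > 0"
  shows "\<exists>k. int (overpartition_count n) =
     2 * int (card {(a,b). a*b = n \<and> a = b}) + 4 * int (card {(a,b). a*b = n \<and> odd a \<and> even b}) + 8*k"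
proof -
  have c: "[int (overpartition_count n) = 2 * int (card (Rs n)) + 4 * int (card (S2 n))] (mod 8)"
    using over_mod8[of n] P0[OF n] P1[OF n] P2[of n] by simp
  obtain k1 where k1: "2 * int (card (Rs n)) + 4 * int (card (S2 n)) = int (overpartition_count n) + 8*k1"
    using c unfolding cong_iff_lin by blast
  obtain j where j: "card (Rs n) + 2 * card (S2 n) =
             card {(a,b). a*b = n \<and> a = b} + 2 * card {(a,b). a*b = n \<and> odd a \<and> even b} + 4 * j"
    using mod4_main[OF n] by blast
  have "int (card (Rs n)) + 2 * int (card (S2 n)) =
             int (card {(a,b). a*b = n \<and> a = b}) + 2 * int (card {(a,b). a*b = n \<and> odd a \<and> even b}) + 4 * int j"
    using arg_cong[OF j, of int] by simp
  then show ?thesis using k1 by (intro exI[of _ "int j - k1"]) (simp add: algebra_simps)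
qed

theorem theorem1p2:
  fixes n :: nat
  shows "[int (overpartition_count n) = (-1) ^ n * int (overpartition_count (4 * n))] (mod 8)"
proof (cases "n = 0")
  case True then show ?thesis by simp
next
  case False
  then have n: "n > 0" by simp
  have n4: "4*n > 0" using n by simp
  define d where "d = int (card {(a,b). a*b = n \<and> a = b})"
  have d4: "int (card {(a,b). a*b = 4*n \<and> a = b}) = d" unfolding d_def by (simp add: D4)
  obtain k1 where k1: "int (overpartition_count n) = 2*d + 4 * int (card {(a,b). a*b = n \<and> odd a \<and> even b}) + 8*k1"
    using pmod[OF n] unfolding d_def by blast
  obtain k2 where k2: "int (overpartition_count (4*n)) = 2*d + 4 * int (card {(a,b). a*b = 4*n \<and> odd a \<and> even b}) + 8*k2"
    using pmod[OF n4] d4 by auto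
  have o4: "card {(a,b). a*b = 4*n \<and> odd a \<and> even b} = card {(a,b). a*b = n \<and> odd a}" by (rule O4)
  show ?thesis
  proof (cases "even n")
    case True
    have "{(a,b). a*b = n \<and> odd a} = {(a::nat,b::nat). a*b = n \<and> odd a \<and> even b}"
      using True by auto
    then have "int (overpartition_count (4*n)) = 2*d + 4 * int (card {(a,b). a*b = n \<and> odd a \<and> even b}) + 8*k2"
      using k2 o4 by simp
    then show ?thesis using True k1 unfolding cong_iff_lin
      by (intro exI[of _ "k2 - k1"]) (simp add: algebra_simps)
  next
    case False
    have e0: "{(a,b). a*b = n \<and> odd a \<and> even b} = {}" using False by auto
    have e1: "{(a,b). a*b = n \<and> odd a} = Rs n" using False by (auto simp: Rs_def)
    obtain l where l: "card (Rs n) = card {(a,b). a*b = n \<and> a = b} + 2*l"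
      using Rs_par[OF n] by blast
    have "int (overpartition_count (4*n)) = 2*d + 4 * (d + 2 * int l) + 8*k2"
      using k2 o4 e1 l unfolding d_def by simp
    moreover have "int (overpartition_count n) = 2*d + 8*k1" using k1 e0 by simp
    moreover have "(-1::int) ^ n = -1" using False by simp
    ultimately show ?thesis unfolding cong_iff_lin
      by (intro exI[of _ "- k1 - k2 - int l - d"]) (simp add: algebra_simps)
  qed
qed

end
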